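(* Let $X$ and $Y$ be topological spaces, and let $\delta_X=(\mathcal{A}_X,\partial_X,\Omega_X)$ and $\delta_Y=(\mathcal{A}_Y,\partial_Y,\Omega_Y)$ be differential triads over $X$ and $Y$, respectively. Assume that $\mathcal{A}_Y$ is a functional algebra sheaf. Then every constant map $c:X\to Y$ is differentiable, i.e. there exist $c_{\mathcal{A}}$ and $c_{\Omega}$ such that $(c,c_{\mathcal{A}},c_{\Omega}):\delta_X\to\delta_Y$ is a morphism of differential triads.
   Context: All algebras are unital, commutative, associative complex algebras. A differential triad over a topological space $Z$ is a triple $(\mathcal{A},\partial,\Omega)$ where $\mathcal{A}$ is a sheaf of such algebras over $Z$, $\Omega$ is an $\mathcal{A}$-module (sheaf of modules), and $\partial:\mathcal{A}\to\Omega$ is a $\mathbb{C}$-linear sheaf morphism satisfying $\partial(\alpha\beta)=\alpha\partial(\beta)+\beta\partial(\alpha)$ for all $(\alpha,\beta)$ in the fiber product $\mathcal{A}\times_Z\mathcal{A}$. For a continuous map $f:X\to Y$ and a sheaf $\mathcal{S}$ on $X$, $f_*(\mathcal{S})$ denotes the push-forward sheaf, with sections $f_*(\mathcal{S})(V)=\mathcal{S}(f^{-1}(V))$; $f_*(\delta_X)=(f_*(\mathcal{A}_X),f_*(\partial_X),f_*(\Omega_X))$ is a differential triad over $Y$. A morphism of differential triads $\delta_X\to\delta_Y$ is a triple $(f,f_{\mathcal{A}},f_{\Omega})$ where $f:X\to Y$ is continuous, $f_{\mathcal{A}}:\mathcal{A}_Y\to f_*(\mathcal{A}_X)$ is a unit-preserving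 morphism of sheaves of algebras, $f_{\Omega}:\Omega_Y\to f_*(\Omega_X)$ is a morphism of sheaves of additive groups with $f_\Omega(aw)=f_{\mathcal{A}}(a)f_{\Omega}(w)$ for all $(a,w)\in\mathcal{A}_Y\times_Y\Omega_Y$, and $f_{\Omega}\circ\partial_Y=f_*(\partial_X)\circ f_{\mathcal{A}}$. A continuous map $f$ is called differentiable if it can be completed to such a morphism. A functional algebra sheaf over $Y$ is a sheaf of algebras which is a subsheaf of the sheaf $\mathcal{C}_Y$ of germs of continuous $\mathbb{C}$-valued functions on $Y$. *)

theory Defs
  imports "HOL-Analysis.Analysis"
begin

text \<open>Sheaves over a topological space are represented by their sections over open
sets together with restriction maps (the sheaf of sections of the etale space).
A morphism of sheaves is a family of maps on sections commuting with restrictions;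
identities in the fibre product are equivalent to identities on sections.\<close>

definition presheaf_on :: "'a topology \<Rightarrow> ('a set \<Rightarrow> 's set) \<Rightarrow> ('a set \<Rightarrow> 'a set \<Rightarrow> 's \<Rightarrow> 's) \<Rightarrow> bool" where
  "presheaf_on T sec res \<longleftrightarrow>
     (\<forall>U V. openin T U \<and> openin T V \<and> V \<subseteq> U \<longrightarrow> (\<forall>s\<in>sec U. res U V s \<in> sec V)) \<and>
     (\<forall>U. openin T U \<longrightarrow> (\<forall>s\<in>sec U. res U U s = s)) \<and>
     (\<forall>U V W. openin T U \<and> openin T V \<and> openin T W \<and> W \<subseteq> V \<and> V \<subseteq> U \<longrightarrow>
        (\<forall>s\<in>sec U. res V W (res U V s) = res U W s))"

definition sheaf_on :: "'a topology \<Rightarrow> ('a set \<Rightarrow> 's set) \<Rightarrow> ('a set \<Rightarrow> 'a set \<Rightarrow> 's \<Rightarrow> 's) \<Rightarrow> bool" where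
  "sheaf_on T sec res \<longleftrightarrow> presheaf_on T sec res \<and>
     (\<forall>U \<U>. openin T U \<and> (\<forall>V\<in>\<U>. openin T V) \<and> \<Union>\<U> = U \<longrightarrow>
        (\<forall>s\<in>sec U. \<forall>t\<in>sec U. (\<forall>V\<in>\<U>. res U V s = res U V t) \<longrightarrow> s = t) \<and>
        (\<forall>f. (\<forall>V\<in>\<U>. f V \<in> sec V) \<and>
             (\<forall>V\<in>\<U>. \<forall>W\<in>\<U>. res V (V \<inter> W) (f V) = res W (V \<inter> W) (f W)) \<longrightarrow>
             (\<exists>s\<in>sec U. \<forall>V\<in>\<U>. res U V s = f V)))"

definition calgebra :: "'s set \<Rightarrow> ('s \<Rightarrow> 's \<Rightarrow> 's) \<Rightarrow> ('s \<Rightarrow> 's \<Rightarrow> 's) \<Rightarrow> (complex \<Rightarrow> 's \<Rightarrow> 's)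
     \<Rightarrow> 's \<Rightarrow> 's \<Rightarrow> bool" where
  "calgebra S add mul smul zero one \<longleftrightarrow>
     zero \<in> S \<and> one \<in> S \<and>
     (\<forall>a\<in>S. \<forall>b\<in>S. add a b \<in> S \<and> mul a b \<in> S) \<and> (\<forall>c. \<forall>a\<in>S. smul c a \<in> S) \<and>
     (\<forall>a\<in>S. \<forall>b\<in>S. \<forall>e\<in>S. add (add a b) e = add a (add b e) \<and> mul (mul a b) e = mul a (mul b e)
          \<and> mul a (add b e) = add (mul a b) (mul a e)) \<and>
     (\<forall>a\<in>S. \<forall>b\<in>S. add a b = add b a \<and> mul a b = mul b a) \<and>
     (\<forall>a\<in>S. add zero a = a \<and> mul one a = a \<and> (\<exists>b\<in>S. add a b = zero)) \<and>
     (\<forall>c. \<forall>a\<in>S. \<forall>b\<in>S. smul c (add a b) = add (smul c a) (smul c b)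
          \<and> smul c (mul a b) = mul (smul c a) b) \<and>
     (\<forall>c d. \<forall>a\<in>S. smul (c + d) a = add (smul c a) (smul d a) \<and> smul (c * d) a = smul c (smul d a)) \<and>
     (\<forall>a\<in>S. smul 1 a = a)"

record ('a, 's) alg_sheaf =
  asec :: "'a set \<Rightarrow> 's set"
  ares :: "'a set \<Rightarrow> 'a set \<Rightarrow> 's \<Rightarrow> 's"
  aadd :: "'a set \<Rightarrow> 's \<Rightarrow> 's \<Rightarrow> 's"
  amul :: "'a set \<Rightarrow> 's \<Rightarrow> 's \<Rightarrow> 's"
  asmul :: "'a set \<Rightarrow> complex \<Rightarrow> 's \<Rightarrow> 's"
  azero :: "'a set \<Rightarrow> 's"
  aone :: "'a set \<Rightarrow> 's"

definition alg_sheaf :: "'a topology \<Rightarrow> ('a, 's) alg_sheaf \<Rightarrow> bool" where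
  "alg_sheaf T A \<longleftrightarrow> sheaf_on T (asec A) (ares A) \<and>
     (\<forall>U. openin T U \<longrightarrow> calgebra (asec A U) (aadd A U) (amul A U) (asmul A U) (azero A U) (aone A U)) \<and>
     (\<forall>U V. openin T U \<and> openin T V \<and> V \<subseteq> U \<longrightarrow>
        ares A U V (aone A U) = aone A V \<and>
        (\<forall>a\<in>asec A U. \<forall>b\<in>asec A U.
            ares A U V (aadd A U a b) = aadd A V (ares A U V a) (ares A U V b) \<and>
            ares A U V (amul A U a b) = amul A V (ares A U V a) (ares A U V b)) \<and>
        (\<forall>c. \<forall>a\<in>asec A U. ares A U V (asmul A U c a) = asmul A V c (ares A U V a)))"

record ('a, 's, 'm) mod_sheaf =
  msec :: "'a set \<Rightarrow> 'm set"
  mres :: "'a set \<Rightarrow> 'a set \<Rightarrow> 'm \<Rightarrow> 'm"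
  madd :: "'a set \<Rightarrow> 'm \<Rightarrow> 'm \<Rightarrow> 'm"
  mzero :: "'a set \<Rightarrow> 'm"
  mact :: "'a set \<Rightarrow> 's \<Rightarrow> 'm \<Rightarrow> 'm"

definition mod_sheaf :: "'a topology \<Rightarrow> ('a, 's) alg_sheaf \<Rightarrow> ('a, 's, 'm) mod_sheaf \<Rightarrow> bool" where
  "mod_sheaf T A M \<longleftrightarrow> sheaf_on T (msec M) (mres M) \<and>
     (\<forall>U. openin T U \<longrightarrow>
        mzero M U \<in> msec M U \<and>
        (\<forall>w\<in>msec M U. \<forall>w'\<in>msec M U. madd M U w w' \<in> msec M U \<and> madd M U w w' = madd M U w' w) \<and>
        (\<forall>w\<in>msec M U. \<forall>w'\<in>msec M U. \<forall>w''\<in>msec M U.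
            madd M U (madd M U w w') w'' = madd M U w (madd M U w' w'')) \<and>
        (\<forall>w\<in>msec M U. madd M U (mzero M U) w = w \<and> (\<exists>w'\<in>msec M U. madd M U w w' = mzero M U)) \<and>
        (\<forall>a\<in>asec A U. \<forall>w\<in>msec M U. mact M U a w \<in> msec M U) \<and>
        (\<forall>a\<in>asec A U. \<forall>w\<in>msec M U. \<forall>w'\<in>msec M U.
            mact M U a (madd M U w w') = madd M U (mact M U a w) (mact M U a w')) \<and>
        (\<forall>a\<in>asec A U. \<forall>b\<in>asec A U. \<forall>w\<in>msec M U.
            mact M U (aadd A U a b) w = madd M U (mact M U a w) (mact M U b w) \<and>
            mact M U (amul A U a b) w = mact M U a (mact M U b w)) \<and>
        (\<forall>w\<in>msec M U. mact M U (aone A U) w = w)) \<and>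
     (\<forall>U V. openin T U \<and> openin T V \<and> V \<subseteq> U \<longrightarrow>
        (\<forall>w\<in>msec M U. \<forall>w'\<in>msec M U. mres M U V (madd M U w w') = madd M V (mres M U V w) (mres M U V w')) \<and>
        (\<forall>a\<in>asec A U. \<forall>w\<in>msec M U. mres M U V (mact M U a w) = mact M V (ares A U V a) (mres M U V w)))"

text \<open>The \<open>\<complex>\<close>-vector space structure of \<open>M\<close> is the one induced via \<open>c \<mapsto> c\<cdot>1\<close>.\<close>
definition diff_triad :: "'a topology \<Rightarrow> ('a, 's) alg_sheaf \<Rightarrow> ('a set \<Rightarrow> 's \<Rightarrow> 'm)
     \<Rightarrow> ('a, 's, 'm) mod_sheaf \<Rightarrow> bool" where
  "diff_triad T A d M \<longleftrightarrow> alg_sheaf T A \<and> mod_sheaf T A M \<and>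
     (\<forall>U. openin T U \<longrightarrow>
        (\<forall>a\<in>asec A U. d U a \<in> msec M U) \<and>
        (\<forall>a\<in>asec A U. \<forall>b\<in>asec A U.
            d U (aadd A U a b) = madd M U (d U a) (d U b) \<and>
            d U (amul A U a b) = madd M U (mact M U a (d U b)) (mact M U b (d U a))) \<and>
        (\<forall>c. \<forall>a\<in>asec A U. d U (asmul A U c a) = mact M U (asmul A U c (aone A U)) (d U a))) \<and>
     (\<forall>U V. openin T U \<and> openin T V \<and> V \<subseteq> U \<longrightarrow>
        (\<forall>a\<in>asec A U. mres M U V (d U a) = d V (ares A U V a)))"

text \<open>Functional algebra sheaf: a subsheaf of algebras of the sheaf of continuous
complex functions; sections over \<open>V\<close> are continuous functions on \<open>V\<close> (extensional
outside \<open>V\<close>), restriction is restriction of functions, operations are pointwise.\<close>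
definition functional_alg_sheaf :: "'b topology \<Rightarrow> ('b, 'b \<Rightarrow> complex) alg_sheaf \<Rightarrow> bool" where
  "functional_alg_sheaf Y A \<longleftrightarrow> alg_sheaf Y A \<and>
     (\<forall>V. openin Y V \<longrightarrow>
        asec A V \<subseteq> {g. continuous_map (subtopology Y V) euclidean g \<and> g \<in> extensional V} \<and>
        azero A V = restrict (\<lambda>_. 0) V \<and> aone A V = restrict (\<lambda>_. 1) V \<and>
        (\<forall>g\<in>asec A V. \<forall>h\<in>asec A V.
            aadd A V g h = restrict (\<lambda>y. g y + h y) V \<and> amul A V g h = restrict (\<lambda>y. g y * h y) V) \<and>
        (\<forall>c. \<forall>g\<in>asec A V. asmul A V c g = restrict (\<lambda>y. c * g y) V) \<and>
        (\<forall>W. openin Y W \<and> W \<subseteq> V \<longrightarrow> (\<forall>g\<in>asec A V. ares A V W g = restrict g W)))"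

text \<open>Morphism \<open>(f, fA, fO)\<close> of differential triads, with the push-forward sheaves written
out: \<open>f\<^sub>*(S)(V) = S(f\<^sup>-\<^sup>1(V))\<close>.\<close>
definition triad_morphism ::
  "'a topology \<Rightarrow> ('a, 'sx) alg_sheaf \<Rightarrow> ('a set \<Rightarrow> 'sx \<Rightarrow> 'mx) \<Rightarrow> ('a, 'sx, 'mx) mod_sheaf \<Rightarrow>
   'b topology \<Rightarrow> ('b, 'sy) alg_sheaf \<Rightarrow> ('b set \<Rightarrow> 'sy \<Rightarrow> 'my) \<Rightarrow> ('b, 'sy, 'my) mod_sheaf \<Rightarrow>
   ('a \<Rightarrow> 'b) \<Rightarrow> ('b set \<Rightarrow> 'sy \<Rightarrow> 'sx) \<Rightarrow> ('b set \<Rightarrow> 'my \<Rightarrow> 'mx) \<Rightarrow> bool" where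
  "triad_morphism X AX dX MX Y AY dY MY f fA fO \<longleftrightarrow>
     continuous_map X Y f \<and>
     (let P = (\<lambda>V. topspace X \<inter> f -` V) in
      (\<forall>V. openin Y V \<longrightarrow>
         (\<forall>a\<in>asec AY V. fA V a \<in> asec AX (P V)) \<and>
         fA V (aone AY V) = aone AX (P V) \<and>
         (\<forall>a\<in>asec AY V. \<forall>b\<in>asec AY V.
             fA V (aadd AY V a b) = aadd AX (P V) (fA V a) (fA V b) \<and>
             fA V (amul AY V a b) = amul AX (P V) (fA V a) (fA V b)) \<and>
         (\<forall>c. \<forall>a\<in>asec AY V. fA V (asmul AY V c a) = asmul AX (P V) c (fA V a)) \<and>
         (\<forall>w\<in>msec MY V. fO V w \<in> msec MX (P V)) \<and>
         (\<forall>w\<in>msec MY V. \<forall>w'\<in>msec MY V. fO V (madd MY V w w') = madd MX (P V) (fO V w) (fO V w')) \<and>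
         (\<forall>a\<in>asec AY V. \<forall>w\<in>msec MY V. fO V (mact MY V a w) = mact MX (P V) (fA V a) (fO V w)) \<and>
         (\<forall>a\<in>asec AY V. fO V (dY V a) = dX (P V) (fA V a))) \<and>
      (\<forall>V W. openin Y V \<and> openin Y W \<and> W \<subseteq> V \<longrightarrow>
         (\<forall>a\<in>asec AY V. ares AX (P V) (P W) (fA V a) = fA W (ares AY V W a)) \<and>
         (\<forall>w\<in>msec MY V. mres MX (P V) (P W) (fO V w) = fO W (mres MY V W w))))"

definition differentiable_map where
  "differentiable_map X AX dX MX Y AY dY MY f \<longleftrightarrow>
     (\<exists>fA fO. triad_morphism X AX dX MX Y AY dY MY f fA fO)"

end

theory Submission
  imports Defs
begin

lemma ms_zero: assumes "mod_sheaf T A M" "openin T U"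
  shows "mzero M U \<in> msec M U"
  by (rule mod_sheaf_def[THEN iffD1, THEN conjunct2, THEN conjunct1, THEN spec, THEN mp, OF assms(1) assms(2), THEN conjunct1])

lemma ms_add: assumes "mod_sheaf T A M" "openin T U"
  shows "\<forall>w\<in>msec M U. \<forall>w'\<in>msec M U. madd M U w w' \<in> msec M U \<and> madd M U w w' = madd M U w' w"
  by (rule mod_sheaf_def[THEN iffD1, THEN conjunct2, THEN conjunct1, THEN spec, THEN mp, OF assms(1) assms(2), THEN conjunct2, THEN conjunct1])

lemma ms_assoc: assumes "mod_sheaf T A M" "openin T U"
  shows "\<forall>w\<in>msec M U. \<forall>w'\<in>msec M U. \<forall>w''\<in>msec M U. madd M U (madd M U w w') w'' = madd M U w (madd M U w' w'')"
  by (rule mod_sheaf_def[THEN iffD1, THEN conjunct2, THEN conjunct1, THEN spec, THEN mp, OF assms(1) assms(2), THEN conjunct2, THEN conjunct2, THEN conjunct1])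

lemma ms_neut: assumes "mod_sheaf T A M" "openin T U"
  shows "\<forall>w\<in>msec M U. madd M U (mzero M U) w = w \<and> (\<exists>w'\<in>msec M U. madd M U w w' = mzero M U)"
  by (rule mod_sheaf_def[THEN iffD1, THEN conjunct2, THEN conjunct1, THEN spec, THEN mp, OF assms(1) assms(2), THEN conjunct2, THEN conjunct2, THEN conjunct2, THEN conjunct1])

lemma ms_act: assumes "mod_sheaf T A M" "openin T U"
  shows "\<forall>a\<in>asec A U. \<forall>w\<in>msec M U. mact M U a w \<in> msec M U"
  by (rule mod_sheaf_def[THEN iffD1, THEN conjunct2, THEN conjunct1, THEN spec, THEN mp, OF assms(1) assms(2), THEN conjunct2, THEN conjunct2, THEN conjunct2, THEN conjunct2, THEN conjunct1])

lemma ms_actadd: assumes "mod_sheaf T A M" "openin T U"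
  shows "\<forall>a\<in>asec A U. \<forall>w\<in>msec M U. \<forall>w'\<in>msec M U. mact M U a (madd M U w w') = madd M U (mact M U a w) (mact M U a w')"
  by (rule mod_sheaf_def[THEN iffD1, THEN conjunct2, THEN conjunct1, THEN spec, THEN mp, OF assms(1) assms(2), THEN conjunct2, THEN conjunct2, THEN conjunct2, THEN conjunct2, THEN conjunct2, THEN conjunct1])

lemma ms_act2: assumes "mod_sheaf T A M" "openin T U"
  shows "\<forall>a\<in>asec A U. \<forall>b\<in>asec A U. \<forall>w\<in>msec M U. mact M U (aadd A U a b) w = madd M U (mact M U a w) (mact M U b w) \<and> mact M U (amul A U a b) w = mact M U a (mact M U b w)"
  by (rule mod_sheaf_def[THEN iffD1, THEN conjunct2, THEN conjunct1, THEN spec, THEN mp, OF assms(1) assms(2), THEN conjunct2, THEN conjunct2, THEN conjunct2, THEN conjunct2, THEN conjunct2, THEN conjunct2, THEN conjunct1])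

lemma ms_actone: assumes "mod_sheaf T A M" "openin T U"
  shows "\<forall>w\<in>msec M U. mact M U (aone A U) w = w"
  by (rule mod_sheaf_def[THEN iffD1, THEN conjunct2, THEN conjunct1, THEN spec, THEN mp, OF assms(1) assms(2), THEN conjunct2, THEN conjunct2, THEN conjunct2, THEN conjunct2, THEN conjunct2, THEN conjunct2, THEN conjunct2])

lemma ms_resadd: assumes "mod_sheaf T A M" "openin T U" "openin T V" "V \<subseteq> U"
  shows "\<forall>w\<in>msec M U. \<forall>w'\<in>msec M U. mres M U V (madd M U w w') = madd M V (mres M U V w) (mres M U V w')"
  by (rule mod_sheaf_def[THEN iffD1, THEN conjunct2, THEN conjunct2, THEN spec, THEN spec, THEN mp, OF assms(1) conjI[OF assms(2) conjI[OF assms(3) assms(4)]], THEN conjunct1])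

lemma ms_resact: assumes "mod_sheaf T A M" "openin T U" "openin T V" "V \<subseteq> U"
  shows "\<forall>a\<in>asec A U. \<forall>w\<in>msec M U. mres M U V (mact M U a w) = mact M V (ares A U V a) (mres M U V w)"
  by (rule mod_sheaf_def[THEN iffD1, THEN conjunct2, THEN conjunct2, THEN spec, THEN spec, THEN mp, OF assms(1) conjI[OF assms(2) conjI[OF assms(3) assms(4)]], THEN conjunct2])

lemma as_resone: assumes "alg_sheaf T A" "openin T U" "openin T V" "V \<subseteq> U"
  shows "ares A U V (aone A U) = aone A V"
  by (rule alg_sheaf_def[THEN iffD1, THEN conjunct2, THEN conjunct2, THEN spec, THEN spec, THEN mp, OF assms(1) conjI[OF assms(2) conjI[OF assms(3) assms(4)]], THEN conjunct1])

lemma as_resops: assumes "alg_sheaf T A" "openin T U" "openin T V" "V \<subseteq> U"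
  shows "\<forall>a\<in>asec A U. \<forall>b\<in>asec A U. ares A U V (aadd A U a b) = aadd A V (ares A U V a) (ares A U V b) \<and> ares A U V (amul A U a b) = amul A V (ares A U V a) (ares A U V b)"
  by (rule alg_sheaf_def[THEN iffD1, THEN conjunct2, THEN conjunct2, THEN spec, THEN spec, THEN mp, OF assms(1) conjI[OF assms(2) conjI[OF assms(3) assms(4)]], THEN conjunct2, THEN conjunct1])

lemma as_ressmul: assumes "alg_sheaf T A" "openin T U" "openin T V" "V \<subseteq> U"
  shows "\<forall>c. \<forall>a\<in>asec A U. ares A U V (asmul A U c a) = asmul A V c (ares A U V a)"
  by (rule alg_sheaf_def[THEN iffD1, THEN conjunct2, THEN conjunct2, THEN spec, THEN spec, THEN mp, OF assms(1) conjI[OF assms(2) conjI[OF assms(3) assms(4)]], THEN conjunct2, THEN conjunct2])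

lemma ca_zero: assumes "calgebra S add mul smul zero one"
  shows "zero \<in> S"
  by (rule calgebra_def[THEN iffD1, OF assms(1), THEN conjunct1])

lemma ca_one: assumes "calgebra S add mul smul zero one"
  shows "one \<in> S"
  by (rule calgebra_def[THEN iffD1, OF assms(1), THEN conjunct2, THEN conjunct1])

lemma ca_close: assumes "calgebra S add mul smul zero one"
  shows "\<forall>a\<in>S. \<forall>b\<in>S. add a b \<in> S \<and> mul a b \<in> S"
  by (rule calgebra_def[THEN iffD1, OF assms(1), THEN conjunct2, THEN conjunct2, THEN conjunct1])

lemma ca_smclose: assumes "calgebra S add mul smul zero one"
  shows "\<forall>c. \<forall>a\<in>S. smul c a \<in> S"
  by (rule calgebra_def[THEN iffD1, OF assms(1), THEN conjunct2, THEN conjunct2, THEN conjunct2, THEN conjunct1])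

lemma ca_assoc: assumes "calgebra S add mul smul zero one"
  shows "\<forall>a\<in>S. \<forall>b\<in>S. \<forall>e\<in>S. add (add a b) e = add a (add b e) \<and> mul (mul a b) e = mul a (mul b e) \<and> mul a (add b e) = add (mul a b) (mul a e)"
  by (rule calgebra_def[THEN iffD1, OF assms(1), THEN conjunct2, THEN conjunct2, THEN conjunct2, THEN conjunct2, THEN conjunct1])

lemma ca_comm: assumes "calgebra S add mul smul zero one"
  shows "\<forall>a\<in>S. \<forall>b\<in>S. add a b = add b a \<and> mul a b = mul b a"
  by (rule calgebra_def[THEN iffD1, OF assms(1), THEN conjunct2, THEN conjunct2, THEN conjunct2, THEN conjunct2, THEN conjunct2, THEN conjunct1])

lemma ca_neut: assumes "calgebra S add mul smul zero one"
  shows "\<forall>a\<in>S. add zero a = a \<and> mul one a = a \<and> (\<exists>b\<in>S. add a b = zero)"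
  by (rule calgebra_def[THEN iffD1, OF assms(1), THEN conjunct2, THEN conjunct2, THEN conjunct2, THEN conjunct2, THEN conjunct2, THEN conjunct2, THEN conjunct1])

lemma ca_sm1: assumes "calgebra S add mul smul zero one"
  shows "\<forall>c. \<forall>a\<in>S. \<forall>b\<in>S. smul c (add a b) = add (smul c a) (smul c b) \<and> smul c (mul a b) = mul (smul c a) b"
  by (rule calgebra_def[THEN iffD1, OF assms(1), THEN conjunct2, THEN conjunct2, THEN conjunct2, THEN conjunct2, THEN conjunct2, THEN conjunct2, THEN conjunct2, THEN conjunct1])

lemma ca_sm2: assumes "calgebra S add mul smul zero one"
  shows "\<forall>c d. \<forall>a\<in>S. smul (c + d) a = add (smul c a) (smul d a) \<and> smul (c * d) a = smul c (smul d a)"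
  by (rule calgebra_def[THEN iffD1, OF assms(1), THEN conjunct2, THEN conjunct2, THEN conjunct2, THEN conjunct2, THEN conjunct2, THEN conjunct2, THEN conjunct2, THEN conjunct2, THEN conjunct1])

lemma ca_sm3: assumes "calgebra S add mul smul zero one"
  shows "\<forall>a\<in>S. smul 1 a = a"
  by (rule calgebra_def[THEN iffD1, OF assms(1), THEN conjunct2, THEN conjunct2, THEN conjunct2, THEN conjunct2, THEN conjunct2, THEN conjunct2, THEN conjunct2, THEN conjunct2, THEN conjunct2])

lemma dt_in: assumes "diff_triad T A d M" "openin T U"
  shows "\<forall>a\<in>asec A U. d U a \<in> msec M U"
  by (rule diff_triad_def[THEN iffD1, THEN conjunct2, THEN conjunct2, THEN conjunct1, THEN spec, THEN mp, OF assms(1) assms(2), THEN conjunct1])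

lemma dt_ops: assumes "diff_triad T A d M" "openin T U"
  shows "\<forall>a\<in>asec A U. \<forall>b\<in>asec A U. d U (aadd A U a b) = madd M U (d U a) (d U b) \<and> d U (amul A U a b) = madd M U (mact M U a (d U b)) (mact M U b (d U a))"
  by (rule diff_triad_def[THEN iffD1, THEN conjunct2, THEN conjunct2, THEN conjunct1, THEN spec, THEN mp, OF assms(1) assms(2), THEN conjunct2, THEN conjunct1])

lemma dt_sm: assumes "diff_triad T A d M" "openin T U"
  shows "\<forall>c. \<forall>a\<in>asec A U. d U (asmul A U c a) = mact M U (asmul A U c (aone A U)) (d U a)"
  by (rule diff_triad_def[THEN iffD1, THEN conjunct2, THEN conjunct2, THEN conjunct1, THEN spec, THEN mp, OF assms(1) assms(2), THEN conjunct2, THEN conjunct2])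

lemma fa_sec: assumes "functional_alg_sheaf Y A" "openin Y V"
  shows "asec A V \<subseteq> {g. continuous_map (subtopology Y V) euclidean g \<and> g \<in> extensional V}"
  by (rule functional_alg_sheaf_def[THEN iffD1, THEN conjunct2, THEN spec, THEN mp, OF assms(1) assms(2), THEN conjunct1])

lemma fa_zero: assumes "functional_alg_sheaf Y A" "openin Y V"
  shows "azero A V = restrict (\<lambda>_. 0) V"
  by (rule functional_alg_sheaf_def[THEN iffD1, THEN conjunct2, THEN spec, THEN mp, OF assms(1) assms(2), THEN conjunct2, THEN conjunct1])

lemma fa_one: assumes "functional_alg_sheaf Y A" "openin Y V"
  shows "aone A V = restrict (\<lambda>_. 1) V"
  by (rule functional_alg_sheaf_def[THEN iffD1, THEN conjunct2, THEN spec, THEN mp, OF assms(1) assms(2), THEN conjunct2, THEN conjunct2, THEN conjunct1])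

lemma fa_ops: assumes "functional_alg_sheaf Y A" "openin Y V"
  shows "\<forall>g\<in>asec A V. \<forall>h\<in>asec A V. aadd A V g h = restrict (\<lambda>y. g y + h y) V \<and> amul A V g h = restrict (\<lambda>y. g y * h y) V"
  by (rule functional_alg_sheaf_def[THEN iffD1, THEN conjunct2, THEN spec, THEN mp, OF assms(1) assms(2), THEN conjunct2, THEN conjunct2, THEN conjunct2, THEN conjunct1])

lemma fa_sm: assumes "functional_alg_sheaf Y A" "openin Y V"
  shows "\<forall>c. \<forall>g\<in>asec A V. asmul A V c g = restrict (\<lambda>y. c * g y) V"
  by (rule functional_alg_sheaf_def[THEN iffD1, THEN conjunct2, THEN spec, THEN mp, OF assms(1) assms(2), THEN conjunct2, THEN conjunct2, THEN conjunct2, THEN conjunct2, THEN conjunct1])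

lemma fa_res: assumes "functional_alg_sheaf Y A" "openin Y V"
  shows "\<forall>W. openin Y W \<and> W \<subseteq> V \<longrightarrow> (\<forall>g\<in>asec A V. ares A V W g = restrict g W)"
  by (rule functional_alg_sheaf_def[THEN iffD1, THEN conjunct2, THEN spec, THEN mp, OF assms(1) assms(2), THEN conjunct2, THEN conjunct2, THEN conjunct2, THEN conjunct2, THEN conjunct2])

lemma as_cal: assumes "alg_sheaf T A" "openin T U"
  shows "calgebra (asec A U) (aadd A U) (amul A U) (asmul A U) (azero A U) (aone A U)"
  by (rule alg_sheaf_def[THEN iffD1, THEN conjunct2, THEN conjunct1, THEN spec, THEN mp, OF assms(1) assms(2)])

lemma dt_alg: assumes "diff_triad T A d M" shows "alg_sheaf T A"
  by (rule diff_triad_def[THEN iffD1, THEN conjunct1, OF assms])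
lemma dt_mod: assumes "diff_triad T A d M" shows "mod_sheaf T A M"
  by (rule diff_triad_def[THEN iffD1, THEN conjunct2, THEN conjunct1, OF assms])
lemma fa_alg: assumes "functional_alg_sheaf Y A" shows "alg_sheaf Y A"
  by (rule functional_alg_sheaf_def[THEN iffD1, THEN conjunct1, OF assms])

lemma sheaf_empty: assumes "sheaf_on T sec res" "s \<in> sec {}" "t \<in> sec {}" shows "s = t"
proof -
  have "openin T {} \<and> (\<forall>V\<in>{}. openin T V) \<and> \<Union>{} = ({}::'a set)" by simp
  from sheaf_on_def[THEN iffD1, THEN conjunct2, OF assms(1), THEN spec, THEN spec, THEN mp, OF this, THEN conjunct1]
  have "\<forall>s\<in>sec {}. \<forall>t\<in>sec {}. (\<forall>V\<in>{}. res {} V s = res {} V t) \<longrightarrow> s = t" .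
  then show ?thesis using assms(2,3) by blast
qed

lemma presheaf_closed: assumes "sheaf_on T sec res" "openin T U" "openin T V" "V \<subseteq> U" "s \<in> sec U"
  shows "res U V s \<in> sec V"
proof -
  have "presheaf_on T sec res" using sheaf_on_def assms(1) by blast
  from presheaf_on_def[THEN iffD1, THEN conjunct1, OF this, THEN spec, THEN spec, THEN mp,
      OF conjI[OF assms(2) conjI[OF assms(3) assms(4)]]]
  show ?thesis using assms(5) by blast
qed

lemma as_sheaf: assumes "alg_sheaf T A" shows "sheaf_on T (asec A) (ares A)"
  by (rule alg_sheaf_def[THEN iffD1, THEN conjunct1, OF assms])
lemma ms_sheaf: assumes "mod_sheaf T A M" shows "sheaf_on T (msec M) (mres M)"
  by (rule mod_sheaf_def[THEN iffD1, THEN conjunct1, OF assms])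

lemma m_idem:
  assumes "mod_sheaf T A M" "openin T U" "w \<in> msec M U" "madd M U w w = w"
  shows "w = mzero M U"
proof -
  note a1 = ms_add[OF assms(1,2)] and a2 = ms_assoc[OF assms(1,2)] and a3 = ms_neut[OF assms(1,2)]
    and a4 = ms_zero[OF assms(1,2)]
  obtain w' where w': "w' \<in> msec M U" "madd M U w w' = mzero M U" using a3 assms(3) by blast
  have "mzero M U = madd M U (madd M U w w) w'" using w' assms(4) by simp
  also have "\<dots> = madd M U w (madd M U w w')" using a2 assms(3) w'(1) by blast
  also have "\<dots> = madd M U w (mzero M U)" using w' by simp
  also have "\<dots> = madd M U (mzero M U) w" using a1 a4 assms(3) by blast
  also have "\<dots> = w" using a3 assms(3) by blast
  finally show ?thesis by simp
qed

lemma mact_zero: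
  assumes "mod_sheaf T A M" "openin T U" "a \<in> asec A U"
  shows "mact M U a (mzero M U) = mzero M U"
proof -
  have z: "mzero M U \<in> msec M U" by (rule ms_zero[OF assms(1,2)])
  have z2: "madd M U (mzero M U) (mzero M U) = mzero M U" using ms_neut[OF assms(1,2)] z by blast
  have i: "mact M U a (mzero M U) \<in> msec M U" using ms_act[OF assms(1,2)] assms(3) z by blast
  have d: "mact M U a (madd M U (mzero M U) (mzero M U)) =
            madd M U (mact M U a (mzero M U)) (mact M U a (mzero M U))"
    using ms_actadd[OF assms(1,2)] assms(3) z by blast
  show ?thesis using m_idem[OF assms(1,2) i] d z2 by simp
qed

lemma mres_zero:
  assumes "mod_sheaf T A M" "openin T U" "openin T V" "V \<subseteq> U"
  shows "mres M U V (mzero M U) = mzero M V"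
proof -
  have z: "mzero M U \<in> msec M U" by (rule ms_zero[OF assms(1,2)])
  have z2: "madd M U (mzero M U) (mzero M U) = mzero M U" using ms_neut[OF assms(1,2)] z by blast
  have i: "mres M U V (mzero M U) \<in> msec M V"
    by (rule presheaf_closed[OF ms_sheaf[OF assms(1)] assms(2,3,4) z])
  have d: "mres M U V (madd M U (mzero M U) (mzero M U)) =
      madd M V (mres M U V (mzero M U)) (mres M U V (mzero M U))"
    using ms_resadd[OF assms] z by blast
  show ?thesis using m_idem[OF assms(1,3) i] d z2 by simp
qed

lemma d_one:
  assumes "diff_triad T A d M" "openin T U"
  shows "d U (aone A U) = mzero M U"
proof -
  note alg = dt_alg[OF assms(1)] and ms = dt_mod[OF assms(1)]
  note cal = as_cal[OF alg assms(2)]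
  have o1: "aone A U \<in> asec A U" by (rule ca_one[OF cal])
  have o2: "amul A U (aone A U) (aone A U) = aone A U" using ca_neut[OF cal] o1 by blast
  have dd1: "d U (aone A U) \<in> msec M U" using dt_in[OF assms] o1 by blast
  have dd2: "d U (amul A U (aone A U) (aone A U)) = madd M U (mact M U (aone A U) (d U (aone A U))) (mact M U (aone A U) (d U (aone A U)))"
    using dt_ops[OF assms] o1 by blast
  have "mact M U (aone A U) (d U (aone A U)) = d U (aone A U)"
    using ms_actone[OF ms assms(2)] dd1 by blast
  then show ?thesis using m_idem[OF ms assms(2) dd1] dd2 o2 by simp
qed

theorem proposition3p1:
  fixes X :: "'a topology" and Y :: "'b topology"
    and AX :: "('a, 'sx) alg_sheaf" and dX :: "'a set \<Rightarrow> 'sx \<Rightarrow> 'mx" and MX :: "('a, 'sx, 'mx) mod_sheaf"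
    and AY :: "('b, 'b \<Rightarrow> complex) alg_sheaf" and dY :: "'b set \<Rightarrow> ('b \<Rightarrow> complex) \<Rightarrow> 'my"
    and MY :: "('b, 'b \<Rightarrow> complex, 'my) mod_sheaf"
    and c :: "'a \<Rightarrow> 'b"
  assumes "diff_triad X AX dX MX"
    and "diff_triad Y AY dY MY"
    and "functional_alg_sheaf Y AY"
    and "c ` topspace X \<subseteq> topspace Y"
    and "\<forall>x\<in>topspace X. \<forall>x'\<in>topspace X. c x = c x'"
  shows "differentiable_map X AX dX MX Y AY dY MY c"
proof -
  define y0 where "y0 = c (SOME x. x \<in> topspace X)"
  define P where "P = (\<lambda>V. topspace X \<inter> c -` V)"
  have cy: "x \<in> topspace X \<Longrightarrow> c x = y0" for x
    using assms(5) unfolding y0_def by (metis someI)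
  have Pne: "P V \<noteq> {} \<Longrightarrow> y0 \<in> V" for V using cy unfolding P_def by blast
  have Pcases: "P V = {} \<or> P V = topspace X" for V using cy unfolding P_def by auto
  have cont: "continuous_map X Y c"
    unfolding continuous_map_def
  proof (intro conjI allI impI)
    show "c \<in> topspace X \<rightarrow> topspace Y" using assms(4) by blast
    fix V assume "openin Y V"
    have "{x \<in> topspace X. c x \<in> V} = P V" unfolding P_def by auto
    then show "openin X {x \<in> topspace X. c x \<in> V}" using Pcases[of V] by auto
  qed
  have Popen: "openin X (P V)" for V using Pcases[of V] by auto
  note algX = dt_alg[OF assms(1)] and msX = dt_mod[OF assms(1)]
  note calX = as_cal[OF algX Popen]
  define fA where "fA = (\<lambda>V (a::'b \<Rightarrow> complex). asmul AX (P V) (a y0) (aone AX (P V)))"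
  define fO where "fO = (\<lambda>V (w::'my). mzero MX (P V))"
  have oneX: "aone AX (P V) \<in> asec AX (P V)" for V by (rule ca_one[OF calX])
  have sminX: "a \<in> asec AX (P V) \<Longrightarrow> asmul AX (P V) k a \<in> asec AX (P V)" for V k a
    using ca_smclose[OF calX] by blast
  have fAin: "fA V a \<in> asec AX (P V)" for V a
    unfolding fA_def by (rule sminX[OF oneX])
  have zin: "mzero MX (P V) \<in> msec MX (P V)" for V by (rule ms_zero[OF msX Popen])
  have aemp: "s = t" if "P V = {}" "s \<in> asec AX (P V)" "t \<in> asec AX (P V)" for V s t
    using sheaf_empty[OF as_sheaf[OF algX]] that by metis
  have mainA: "\<forall>V. openin Y V \<longrightarrow>
         (\<forall>a\<in>asec AY V. fA V a \<in> asec AX (P V)) \<and>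
         fA V (aone AY V) = aone AX (P V) \<and>
         (\<forall>a\<in>asec AY V. \<forall>b\<in>asec AY V.
             fA V (aadd AY V a b) = aadd AX (P V) (fA V a) (fA V b) \<and>
             fA V (amul AY V a b) = amul AX (P V) (fA V a) (fA V b)) \<and>
         (\<forall>k. \<forall>a\<in>asec AY V. fA V (asmul AY V k a) = asmul AX (P V) k (fA V a)) \<and>
         (\<forall>w\<in>msec MY V. fO V w \<in> msec MX (P V)) \<and>
         (\<forall>w\<in>msec MY V. \<forall>w'\<in>msec MY V. fO V (madd MY V w w') = madd MX (P V) (fO V w) (fO V w')) \<and>
         (\<forall>a\<in>asec AY V. \<forall>w\<in>msec MY V. fO V (mact MY V a w) = mact MX (P V) (fA V a) (fO V w)) \<and>
         (\<forall>a\<in>asec AY V. fO V (dY V a) = dX (P V) (fA V a))"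
  proof (intro allI impI conjI ballI)
    fix V assume V: "openin Y V"
    let ?U = "P V"
    note cal = calX[of V]
    have one: "aone AX ?U \<in> asec AX ?U" by (rule oneX)
    have smadd: "asmul AX ?U (k + l) a = aadd AX ?U (asmul AX ?U k a) (asmul AX ?U l a)" if "a \<in> asec AX ?U" for k l a
      using ca_sm2[OF cal] that by blast
    have smmul: "asmul AX ?U (k * l) a = asmul AX ?U k (asmul AX ?U l a)" if "a \<in> asec AX ?U" for k l a
      using ca_sm2[OF cal] that by blast
    have smm: "asmul AX ?U k (amul AX ?U a b) = amul AX ?U (asmul AX ?U k a) b"
      if "a \<in> asec AX ?U" "b \<in> asec AX ?U" for k a b
      using ca_sm1[OF cal] that by blast
    have mone: "amul AX ?U (aone AX ?U) a = a" if "a \<in> asec AX ?U" for a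
      using ca_neut[OF cal] that by blast
    have sm1: "asmul AX ?U 1 a = a" if "a \<in> asec AX ?U" for a
      using ca_sm3[OF cal] that by blast
    have addin: "aadd AX ?U a b \<in> asec AX ?U" "amul AX ?U a b \<in> asec AX ?U"
      if "a \<in> asec AX ?U" "b \<in> asec AX ?U" for a b
      using ca_close[OF cal] that by blast+
    show "fA V a \<in> asec AX ?U" for a by (rule fAin)
    show "fO V w \<in> msec MX ?U" for w unfolding fO_def by (rule zin)
    show "fA V (aone AY V) = aone AX ?U"
    proof (cases "?U = {}")
      case True then show ?thesis using aemp fAin one by blast
    next
      case False
      then have "aone AY V y0 = 1" using Pne fa_one[OF assms(3) V] by simp
      then show ?thesis unfolding fA_def using sm1 one by simp
    qed
    show "fA V (aadd AY V a b) = aadd AX ?U (fA V a) (fA V b)" if "a \<in> asec AY V" "b \<in> asec AY V" for a b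
    proof (cases "?U = {}")
      case True then show ?thesis using aemp[OF True fAin addin(1)[OF fAin fAin]] by simp
    next
      case False
      then have "aadd AY V a b y0 = a y0 + b y0" using Pne fa_ops[OF assms(3) V] that by simp
      then show ?thesis unfolding fA_def using smadd one by simp
    qed
    show "fA V (amul AY V a b) = amul AX ?U (fA V a) (fA V b)" if "a \<in> asec AY V" "b \<in> asec AY V" for a b
    proof (cases "?U = {}")
      case True then show ?thesis using aemp[OF True fAin addin(2)[OF fAin fAin]] by simp
    next
      case False
      then have e: "amul AY V a b y0 = a y0 * b y0" using Pne fa_ops[OF assms(3) V] that by simp
      have "asmul AX ?U (a y0 * b y0) (aone AX ?U) = asmul AX ?U (a y0) (asmul AX ?U (b y0) (aone AX ?U))"
        using smmul one by blast
      also have "\<dots> = asmul AX ?U (a y0) (amul AX ?U (aone AX ?U) (asmul AX ?U (b y0) (aone AX ?U)))"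
        using mone[OF sminX[OF one]] by simp
      also have "\<dots> = amul AX ?U (asmul AX ?U (a y0) (aone AX ?U)) (asmul AX ?U (b y0) (aone AX ?U))"
        using smm[OF one sminX[OF one]] by simp
      finally show ?thesis unfolding fA_def e .
    qed
    show "fA V (asmul AY V k a) = asmul AX ?U k (fA V a)" if "a \<in> asec AY V" for k a
    proof (cases "?U = {}")
      case True then show ?thesis using aemp[OF True fAin sminX[OF fAin]] by simp
    next
      case False
      then have "asmul AY V k a y0 = k * a y0" using Pne fa_sm[OF assms(3) V] that by simp
      then show ?thesis unfolding fA_def using smmul one by simp
    qed
    show "fO V (madd MY V w w') = madd MX ?U (fO V w) (fO V w')" for w w'
      unfolding fO_def using ms_neut[OF msX Popen] zin by metis
    show "fO V (mact MY V a w) = mact MX ?U (fA V a) (fO V w)" for a w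
      unfolding fO_def using mact_zero[OF msX Popen fAin] by simp
    show "fO V (dY V a) = dX ?U (fA V a)" for a
    proof -
      have "dX ?U (fA V a) = mact MX ?U (asmul AX ?U (a y0) (aone AX ?U)) (dX ?U (aone AX ?U))"
        unfolding fA_def using dt_sm[OF assms(1) Popen] one by blast
      also have "\<dots> = mzero MX ?U" using d_one[OF assms(1) Popen] mact_zero[OF msX Popen sminX[OF one]] by simp
      finally show ?thesis unfolding fO_def by simp
    qed
  qed
  have mainR: "\<forall>V W. openin Y V \<and> openin Y W \<and> W \<subseteq> V \<longrightarrow>
         (\<forall>a\<in>asec AY V. ares AX (P V) (P W) (fA V a) = fA W (ares AY V W a)) \<and>
         (\<forall>w\<in>msec MY V. mres MX (P V) (P W) (fO V w) = fO W (mres MY V W w))"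
  proof (intro allI impI conjI ballI)
    fix V W assume VW: "openin Y V \<and> openin Y W \<and> W \<subseteq> V"
    have PW: "P W \<subseteq> P V" using VW unfolding P_def by auto
    show "mres MX (P V) (P W) (fO V w) = fO W (mres MY V W w)" for w
      unfolding fO_def using mres_zero[OF msX Popen Popen PW] .
    show "ares AX (P V) (P W) (fA V a) = fA W (ares AY V W a)" if a: "a \<in> asec AY V" for a
    proof (cases "P W = {}")
      case True
      have "ares AX (P V) (P W) (fA V a) \<in> asec AX (P W)"
        by (rule presheaf_closed[OF as_sheaf[OF algX] Popen Popen PW fAin])
      then show ?thesis using aemp[OF True _ fAin] by blast
    next
      case False
      then have y: "y0 \<in> W" using Pne by blast
      have "ares AY V W a = restrict a W" using fa_res[OF assms(3)] VW a by blast
      then have e: "ares AY V W a y0 = a y0" using y by simp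
      have h1: "ares AX (P V) (P W) (aone AX (P V)) = aone AX (P W)"
        by (rule as_resone[OF algX Popen Popen PW])
      have h2: "ares AX (P V) (P W) (asmul AX (P V) k (aone AX (P V))) = asmul AX (P W) k (ares AX (P V) (P W) (aone AX (P V)))" for k
        using as_ressmul[OF algX Popen Popen PW] oneX by blast
      show ?thesis unfolding fA_def e using h1 h2 by simp
    qed
  qed
  have "triad_morphism X AX dX MX Y AY dY MY c fA fO"
    unfolding triad_morphism_def Let_def
    using cont mainA[unfolded P_def] mainR[unfolded P_def] by (intro conjI)
  then show ?thesis unfolding differentiable_map_def by blast
qed

end
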